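(* Let $n\geq 2$, $1\leq k\leq n-1$, $w=w_1\cdots w_n\in\mathfrak{S}_n$, and let the section $w_i\cdots w_j$ be $k$-ascending. (1) If there is $t>j$ with $w_j<w_t$ and there is no $k$-down in $w_j\cdots w_t$, then there is $t'$ with $j<t'\leq t$ such that $w_i\cdots w_j\cdots w_{t'}$ is $k$-ascending. (2) If there is $s<i$ with $w_s<w_i$ and there is no $k$-down in $w_s\cdots w_i$, then there is $s'$ with $s\leq s'<i$ such that $w_{s'}\cdots w_i\cdots w_j$ is $k$-ascending.
   Context: $\mathfrak{S}_n$ is the set of permutations $w=w_1\cdots w_n$ of $\{1,\dots,n\}$. A section of $w$ is a consecutive block $w_sw_{s+1}\cdots w_t$ ($s\le t$). A section $w_s\cdots w_t$ is a $k$-up if $s<t$ and $w_t-w_s\geq k$, and a $k$-down if $s<t$ and $w_s-w_t\geq k$. A $k$-up (or $k$-down) "in" the section $w_a\cdots w_b$ means a $k$-up (or $k$-down) $w_s\cdots w_t$ with $a\leq s<t\leq b$. A section $w_i\cdots w_j$ with $i<j$ is $k$-ascending if: $w_i=\min\{w_i,\dots,w_j\}$ and $w_j=\max\{w_i,\dots,w_j\}$; $w_j-w_i\geq k$; and there is no $k$-down in $w_i\cdots w_j$. *)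

theory Defs
  imports Main
begin

(* A permutation w_1...w_n of {1..n} is modelled as w :: nat => nat restricted to {1..n},
   positions and values both 1-indexed. *)

definition is_perm :: "nat \<Rightarrow> (nat \<Rightarrow> nat) \<Rightarrow> bool" where
  "is_perm n w \<longleftrightarrow> bij_betw w {1..n} {1..n}"

definition k_up :: "nat \<Rightarrow> (nat \<Rightarrow> nat) \<Rightarrow> nat \<Rightarrow> nat \<Rightarrow> bool" where
  "k_up k w s t \<longleftrightarrow> s < t \<and> int (w t) - int (w s) \<ge> int k"

definition k_down :: "nat \<Rightarrow> (nat \<Rightarrow> nat) \<Rightarrow> nat \<Rightarrow> nat \<Rightarrow> bool" where
  "k_down k w s t \<longleftrightarrow> s < t \<and> int (w s) - int (w t) \<ge> int k"

definition has_k_down_in :: "nat \<Rightarrow> (nat \<Rightarrow> nat) \<Rightarrow> nat \<Rightarrow> nat \<Rightarrow> bool" where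
  "has_k_down_in k w a b \<longleftrightarrow> (\<exists>s t. a \<le> s \<and> s < t \<and> t \<le> b \<and> k_down k w s t)"

definition k_ascending :: "nat \<Rightarrow> (nat \<Rightarrow> nat) \<Rightarrow> nat \<Rightarrow> nat \<Rightarrow> bool" where
  "k_ascending k w i j \<longleftrightarrow> i < j
     \<and> w i = Min (w ` {i..j}) \<and> w j = Max (w ` {i..j})
     \<and> int (w j) - int (w i) \<ge> int k
     \<and> \<not> has_k_down_in k w i j"

end

theory Submission
  imports Defs
begin

lemma kasc_iff:
  "k_ascending k w i j \<longleftrightarrow> i < j \<and> (\<forall>p. i \<le> p \<and> p \<le> j \<longrightarrow> w i \<le> w p \<and> w p \<le> w j)
     \<and> int (w j) - int (w i) \<ge> int k
     \<and> (\<forall>s u. i \<le> s \<and> s < u \<and> u \<le> j \<longrightarrow> int (w s) - int (w u) < int k)"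
proof -
  have A: "i \<le> j \<Longrightarrow> (w i = Min (w ` {i..j})) \<longleftrightarrow> (\<forall>p. i \<le> p \<and> p \<le> j \<longrightarrow> w i \<le> w p)"
    by (auto intro!: Min_eqI[symmetric])
  have B: "i \<le> j \<Longrightarrow> (w j = Max (w ` {i..j})) \<longleftrightarrow> (\<forall>p. i \<le> p \<and> p \<le> j \<longrightarrow> w p \<le> w j)"
    by (auto intro!: Max_eqI[symmetric])
  have C: "(\<not> has_k_down_in k w i j) \<longleftrightarrow> (\<forall>s u. i \<le> s \<and> s < u \<and> u \<le> j \<longrightarrow> int (w s) - int (w u) < int k)"
    unfolding has_k_down_in_def k_down_def by (meson not_le)
  show ?thesis
  proof (cases "i < j")
    case True
    then show ?thesis unfolding k_ascending_def C using A[OF less_imp_le[OF True]] B[OF less_imp_le[OF True]]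
      by blast
  qed (simp add: k_ascending_def)
qed

theorem lemma2p4:
  fixes n k i j :: nat and w :: "nat \<Rightarrow> nat"
  assumes "n \<ge> 2" and "1 \<le> k" and "k \<le> n - 1"
    and "is_perm n w"
    and "1 \<le> i" and "j \<le> n"
    and "k_ascending k w i j"
  shows "(\<forall>t. j < t \<and> t \<le> n \<and> w j < w t \<and> \<not> has_k_down_in k w j t
            \<longrightarrow> (\<exists>t'. j < t' \<and> t' \<le> t \<and> k_ascending k w i t'))
       \<and> (\<forall>s. 1 \<le> s \<and> s < i \<and> w s < w i \<and> \<not> has_k_down_in k w s i
            \<longrightarrow> (\<exists>s'. s \<le> s' \<and> s' < i \<and> k_ascending k w s' j))"
proof (intro conjI allI impI)
  have K: "i < j" "\<And>p. i \<le> p \<Longrightarrow> p \<le> j \<Longrightarrow> w i \<le> w p \<and> w p \<le> w j"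
    "int (w j) - int (w i) \<ge> int k"
    "\<And>s u. i \<le> s \<Longrightarrow> s < u \<Longrightarrow> u \<le> j \<Longrightarrow> int (w s) - int (w u) < int k"
    using assms(7) unfolding kasc_iff by blast+
  {
    fix t assume h: "j < t \<and> t \<le> n \<and> w j < w t \<and> \<not> has_k_down_in k w j t"
    have ND: "\<And>s u. j \<le> s \<Longrightarrow> s < u \<Longrightarrow> u \<le> t \<Longrightarrow> int (w s) - int (w u) < int k"
      using h unfolding has_k_down_in_def k_down_def by (meson not_le)
    define t' where "t' = (LEAST p. j < p \<and> p \<le> t \<and> w j < w p)"
    have P: "j < t' \<and> t' \<le> t \<and> w j < w t'"
      unfolding t'_def by (rule LeastI[of _ t]) (use h in auto)
    have Q: "\<And>p. j < p \<Longrightarrow> p < t' \<Longrightarrow> w p \<le> w j"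
    proof -
      fix p assume "j < p" "p < t'"
      then have "\<not> (j < p \<and> p \<le> t \<and> w j < w p)"
        unfolding t'_def using not_less_Least by blast
      then show "w p \<le> w j" using \<open>j < p\<close> \<open>p < t'\<close> P by auto
    qed
    have "k_ascending k w i t'"
      unfolding kasc_iff
    proof (intro conjI allI impI)
      show "i < t'" using K(1) P by simp
      show "int k \<le> int (w t') - int (w i)" using K(3) P by linarith
    next
      fix p assume p: "i \<le> p \<and> p \<le> t'"
      show "w i \<le> w p"
      proof (cases "p \<le> j")
        case True then show ?thesis using K(2)[of p] p by simp
      next
        case False
        show ?thesis
        proof (cases "p = t'")
          case True then show ?thesis using K(2)[of j] K(1) P by simp
        next
          case False
          have "int (w j) - int (w p) < int k" using P p False \<open>\<not> p \<le> j\<close> by (intro ND) auto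
          then show ?thesis using K(3) by linarith
        qed
      qed
      show "w p \<le> w t'"
      proof (cases "p \<le> j")
        case True then show ?thesis using K(2)[of p] p P by simp
      next
        case False then show ?thesis using Q[of p] P p by (cases "p = t'") auto
      qed
    next
      fix s u assume su: "i \<le> s \<and> s < u \<and> u \<le> t'"
      show "int (w s) - int (w u) < int k"
      proof (cases "u \<le> j")
        case True then show ?thesis using K(4) su by simp
      next
        case False
        show ?thesis
        proof (cases "j \<le> s")
          case True then show ?thesis using su P by (intro ND) auto
        next
          case False
          then have "w s \<le> w j" using K(2)[of s] su by simp
          moreover have "int (w j) - int (w u) < int k" using ND[of j u] su P \<open>\<not> u \<le> j\<close> by auto
          ultimately show ?thesis by linarith
        qed
      qed
    qed
    then show "\<exists>t'. j < t' \<and> t' \<le> t \<and> k_ascending k w i t'" using P by blast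
  }
  {
    fix s assume h: "1 \<le> s \<and> s < i \<and> w s < w i \<and> \<not> has_k_down_in k w s i"
    have ND: "\<And>a u. s \<le> a \<Longrightarrow> a < u \<Longrightarrow> u \<le> i \<Longrightarrow> int (w a) - int (w u) < int k"
      using h unfolding has_k_down_in_def k_down_def by (meson not_le)
    define s' where "s' = (GREATEST p. s \<le> p \<and> p < i \<and> w p < w i)"
    have bnd: "\<forall>y. s \<le> y \<and> y < i \<and> w y < w i \<longrightarrow> y \<le> i" by auto
    have P: "s \<le> s' \<and> s' < i \<and> w s' < w i"
      unfolding s'_def by (rule GreatestI_nat[of _ s i]) (use h in auto)
    have Q: "\<And>p. s' < p \<Longrightarrow> p < i \<Longrightarrow> w i \<le> w p"
    proof -
      fix p assume "s' < p" "p < i"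
      have "\<not> (s \<le> p \<and> p < i \<and> w p < w i)"
      proof
        assume hp: "s \<le> p \<and> p < i \<and> w p < w i"
        have "p \<le> s'" unfolding s'_def
          by (rule Greatest_le_nat[where P="\<lambda>p. s \<le> p \<and> p < i \<and> w p < w i" and b=i, OF hp]) (use bnd in blast)
        then show False using \<open>s' < p\<close> by simp
      qed
      then show "w i \<le> w p" using \<open>s' < p\<close> \<open>p < i\<close> P by auto
    qed
    have "k_ascending k w s' j"
      unfolding kasc_iff
    proof (intro conjI allI impI)
      show "s' < j" using K(1) P by simp
      show "int k \<le> int (w j) - int (w s')" using K(3) P by linarith
    next
      fix p assume p: "s' \<le> p \<and> p \<le> j"
      show "w p \<le> w j"
      proof (cases "i \<le> p")
        case True then show ?thesis using K(2)[of p] p by simp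
      next
        case False
        show ?thesis
        proof (cases "p = s'")
          case True then show ?thesis using K(2)[of i] K(1) P by simp
        next
          case False
          have "int (w p) - int (w i) < int k" using P p False \<open>\<not> i \<le> p\<close> by (intro ND) auto
          then show ?thesis using K(3) by linarith
        qed
      qed
      show "w s' \<le> w p"
      proof (cases "i \<le> p")
        case True then show ?thesis using K(2)[of p] p P by simp
      next
        case False then show ?thesis using Q[of p] P p by (cases "p = s'") auto
      qed
    next
      fix a u assume su: "s' \<le> a \<and> a < u \<and> u \<le> j"
      show "int (w a) - int (w u) < int k"
      proof (cases "i \<le> a")
        case True then show ?thesis using K(4) su by simp
      next
        case False
        show ?thesis
        proof (cases "u \<le> i")
          case True then show ?thesis using su P by (intro ND) auto
        next
          case False
          then have "w i \<le> w u" using K(2)[of u] su by simp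
          moreover have "int (w a) - int (w i) < int k" using ND[of a i] su P \<open>\<not> i \<le> a\<close> by auto
          ultimately show ?thesis by linarith
        qed
      qed
    qed
    then show "\<exists>s'. s \<le> s' \<and> s' < i \<and> k_ascending k w s' j" using P by blast
  }
qed

end
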